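(* Let $c\in(0,1)$ and $C\ge1$ be constants such that for all $n\ge1$, all integers $0\le w\le cn$ and all integers $0\le i\le n/2$, one has $|K^{(n)}_w(i)|\le C\binom nw\left(1-\frac{2w}{n}\right)^i$. Let $\mathcal{C}\subseteq\mathbb{F}_2^n$ be a binary linear code with $\mathcal{C}^\perp\neq\{0\}$, and let $d^\perp<n/2$ be the dual distance of $\mathcal{C}$ (the minimum Hamming weight of a nonzero vector of $\mathcal{C}^\perp$); put $t^\perp=\lfloor(d^\perp-1)/2\rfloor$. Let $w$ be an integer with $0\le w\le cn$, let $\varepsilon>0$, and let $\rho$ be a pmf on $\mathbb{F}_2^n$ satisfying $d_{TV}(P_{\mathcal{C}^\perp}\ast\rho,P_{U_n})\le\varepsilon$. Then $$\frac{1}{\binom nw}\sum_{x:|x|=w}2^n\hat\rho(x)\le\frac{|\mathcal{C}^\perp|V_n(t^\perp)}{2^{n-1}}+Cn\left(1-\frac{2w}{n}\right)^{t^\perp}+2\varepsilon.$$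
   Context: Krawtchouk polynomial: $K^{(n)}_w(i)=\sum_{j=0}^w(-1)^j\binom ij\binom{n-i}{w-j}$. The Fourier transform of $f:\mathbb{F}_2^n\to\mathbb{R}$ is $\hat f(y)=2^{-n}\sum_{x\in\mathbb{F}_2^n}f(x)(-1)^{x^\intercal y}$. $|x|$ is Hamming weight; $P_{\mathcal{C}^\perp}$ is the uniform pmf on the dual code $\mathcal{C}^\perp$; $P_{U_n}$ is uniform on $\mathbb{F}_2^n$; $(f\ast g)(x)=\sum_y f(y)g(x-y)$; $V_n(t)=\sum_{j=0}^t\binom nj$; $d_{TV}(P,Q)=\frac12\sum_x|P(x)-Q(x)|$. *)

theory Defs
  imports Complex_Main
begin

text \<open>Vectors of F_2^n are represented as functions nat => bool vanishing (False) outside {0..<n};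
  addition in F_2 is exclusive or.\<close>

definition vecs :: "nat \<Rightarrow> (nat \<Rightarrow> bool) set" where
  "vecs n = {x. \<forall>i. n \<le> i \<longrightarrow> \<not> x i}"

definition vzero :: "nat \<Rightarrow> bool" where
  "vzero = (\<lambda>i. False)"

definition vadd :: "(nat \<Rightarrow> bool) \<Rightarrow> (nat \<Rightarrow> bool) \<Rightarrow> (nat \<Rightarrow> bool)" where
  "vadd x y = (\<lambda>i. x i \<noteq> y i)"

definition vsub :: "(nat \<Rightarrow> bool) \<Rightarrow> (nat \<Rightarrow> bool) \<Rightarrow> (nat \<Rightarrow> bool)" where
  "vsub x y = vadd x y"

definition hweight :: "nat \<Rightarrow> (nat \<Rightarrow> bool) \<Rightarrow> nat" where
  "hweight n x = card {i. i < n \<and> x i}"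

definition chr :: "nat \<Rightarrow> (nat \<Rightarrow> bool) \<Rightarrow> (nat \<Rightarrow> bool) \<Rightarrow> real" where
  "chr n x y = (-1) ^ card {i. i < n \<and> x i \<and> y i}"

definition linear_code :: "nat \<Rightarrow> (nat \<Rightarrow> bool) set \<Rightarrow> bool" where
  "linear_code n C \<longleftrightarrow> C \<subseteq> vecs n \<and> vzero \<in> C \<and> (\<forall>x\<in>C. \<forall>y\<in>C. vadd x y \<in> C)"

definition dual_code :: "nat \<Rightarrow> (nat \<Rightarrow> bool) set \<Rightarrow> (nat \<Rightarrow> bool) set" where
  "dual_code n C = {y \<in> vecs n. \<forall>x\<in>C. even (card {i. i < n \<and> x i \<and> y i})}"

definition dual_distance :: "nat \<Rightarrow> (nat \<Rightarrow> bool) set \<Rightarrow> nat" where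
  "dual_distance n C = Min (hweight n ` (dual_code n C - {vzero}))"

definition krawtchouk :: "nat \<Rightarrow> nat \<Rightarrow> nat \<Rightarrow> real" where
  "krawtchouk n w i = (\<Sum>j = 0..w. (-1) ^ j * real (i choose j) * real ((n - i) choose (w - j)))"

definition fourier :: "nat \<Rightarrow> ((nat \<Rightarrow> bool) \<Rightarrow> real) \<Rightarrow> (nat \<Rightarrow> bool) \<Rightarrow> real" where
  "fourier n f y = (1 / 2 ^ n) * (\<Sum>x\<in>vecs n. f x * chr n x y)"

definition conv :: "nat \<Rightarrow> ((nat \<Rightarrow> bool) \<Rightarrow> real) \<Rightarrow> ((nat \<Rightarrow> bool) \<Rightarrow> real) \<Rightarrow> (nat \<Rightarrow> bool) \<Rightarrow> real" where
  "conv n f g x = (\<Sum>y\<in>vecs n. f y * g (vsub x y))"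

definition is_pmf :: "nat \<Rightarrow> ((nat \<Rightarrow> bool) \<Rightarrow> real) \<Rightarrow> bool" where
  "is_pmf n p \<longleftrightarrow> (\<forall>x. p x \<ge> 0) \<and> (\<forall>x. x \<notin> vecs n \<longrightarrow> p x = 0) \<and> (\<Sum>x\<in>vecs n. p x) = 1"

definition unif_on :: "(nat \<Rightarrow> bool) set \<Rightarrow> (nat \<Rightarrow> bool) \<Rightarrow> real" where
  "unif_on S x = (if x \<in> S then 1 / real (card S) else 0)"

definition dTV :: "nat \<Rightarrow> ((nat \<Rightarrow> bool) \<Rightarrow> real) \<Rightarrow> ((nat \<Rightarrow> bool) \<Rightarrow> real) \<Rightarrow> real" where
  "dTV n P Q = (1 / 2) * (\<Sum>x\<in>vecs n. \<bar>P x - Q x\<bar>)"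

definition hball_vol :: "nat \<Rightarrow> nat \<Rightarrow> nat" where
  "hball_vol n t = (\<Sum>j = 0..t. n choose j)"

end

theory Submission imports Defs begin


lemma kraw_set:
  fixes U Y :: "nat set"
  assumes "finite U" "Y \<subseteq> U"
  shows "(\<Sum>X\<in>{X. X \<subseteq> U \<and> card X = w}. (-1::real)^card(X \<inter> Y)) = krawtchouk (card U) w (card Y)"
proof -
  define Z where "Z = U - Y"
  have fY: "finite Y" and fZ: "finite Z" using assms finite_subset Z_def by auto
  have cZ: "card Z = card U - card Y" using card_Diff_subset assms fY Z_def by auto
  define S where "S = Sigma {0..w} (\<lambda>j. {A. A \<subseteq> Y \<and> card A = j} \<times> {B. B \<subseteq> Z \<and> card B = w - j})"
  have "(\<Sum>X\<in>{X. X \<subseteq> U \<and> card X = w}. (-1::real)^card(X \<inter> Y)) = (\<Sum>p\<in>S. (-1::real)^fst p)"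
  proof (rule sum.reindex_bij_witness[where i="\<lambda>p. fst (snd p) \<union> snd (snd p)" and j="\<lambda>X. (card (X\<inter>Y), X\<inter>Y, X\<inter>Z)"])
    fix X assume X: "X \<in> {X. X \<subseteq> U \<and> card X = w}"
    show "fst (snd (card (X\<inter>Y), X\<inter>Y, X\<inter>Z)) \<union> snd (snd (card (X\<inter>Y), X\<inter>Y, X\<inter>Z)) = X"
      using X Z_def by auto
    have fX: "finite X" using X assms finite_subset by auto
    have "card X = card (X\<inter>Y) + card (X\<inter>Z)"
    proof -
      have "X = (X\<inter>Y) \<union> (X\<inter>Z)" using X Z_def by auto
      moreover have "(X\<inter>Y) \<inter> (X\<inter>Z) = {}" using Z_def by auto
      ultimately show ?thesis using fX card_Un_disjoint[of "X\<inter>Y" "X\<inter>Z"] by (metis finite_Int)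
    qed
    then show "(card (X\<inter>Y), X\<inter>Y, X\<inter>Z) \<in> S" using X unfolding S_def by auto
    show "(-1::real) ^ fst (card (X\<inter>Y), X\<inter>Y, X\<inter>Z) = (-1) ^ card (X \<inter> Y)" by simp
  next
    fix p assume p: "p \<in> S"
    then obtain j A B where pj: "p = (j, A, B)" and A: "A \<subseteq> Y" "card A = j" and B: "B \<subseteq> Z" "card B = w - j" and j: "j \<le> w"
      unfolding S_def by auto
    have e1: "(A \<union> B) \<inter> Y = A" using A B Z_def by auto
    have e2: "(A \<union> B) \<inter> Z = B" using A B Z_def by auto
    show "(card ((fst (snd p) \<union> snd (snd p)) \<inter> Y), (fst (snd p) \<union> snd (snd p)) \<inter> Y, (fst (snd p) \<union> snd (snd p)) \<inter> Z) = p"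
      using pj e1 e2 A by simp
    have "card (A \<union> B) = card A + card B"
      using A B finite_subset[OF A(1) fY] finite_subset[OF B(1) fZ] Z_def by (intro card_Un_disjoint) auto
    then show "fst (snd p) \<union> snd (snd p) \<in> {X. X \<subseteq> U \<and> card X = w}"
      using pj A B j Z_def assms(2) by auto
  qed
  also have "\<dots> = (\<Sum>j\<in>{0..w}. \<Sum>q\<in>{A. A \<subseteq> Y \<and> card A = j} \<times> {B. B \<subseteq> Z \<and> card B = w - j}. (-1::real)^j)"
    unfolding S_def by (subst sum.Sigma) (use fY fZ in \<open>auto simp: split_def\<close>)
  also have "\<dots> = (\<Sum>j\<in>{0..w}. (-1::real)^j * real (card Y choose j) * real (card Z choose (w - j)))"
    by (rule sum.cong) (simp_all add: card_cartesian_product n_subsets fY fZ)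
  finally show ?thesis unfolding krawtchouk_def cZ by simp
qed

lemma kraw_abs_le:
  assumes "i \<le> n"
  shows "\<bar>krawtchouk n w i\<bar> \<le> real (n choose w)"
proof -
  have "krawtchouk n w i = (\<Sum>X\<in>{X. X \<subseteq> {..<n} \<and> card X = w}. (-1::real)^card(X \<inter> {..<i}))"
    using kraw_set[of "{..<n}" "{..<i}" w] assms by auto
  also have "\<bar>\<dots>\<bar> \<le> (\<Sum>X\<in>{X. X \<subseteq> {..<n} \<and> card X = w}. \<bar>(-1::real)^card(X \<inter> {..<i})\<bar>)"
    by (rule sum_abs)
  also have "\<dots> = real (n choose w)" using n_subsets[of "{..<n}" w] by simp
  finally show ?thesis .
qed

lemma neg1_sq: "(-1::real)^k * (-1)^k = 1"
  by (metis power_mult_distrib mult_minus1 minus_minus power_one)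

lemma kraw_sym:
  assumes "i \<le> n"
  shows "\<bar>krawtchouk n w (n - i)\<bar> = \<bar>krawtchouk n w i\<bar>"
proof -
  let ?S = "{X. X \<subseteq> {..<n} \<and> card X = w}"
  have k1: "krawtchouk n w i = (\<Sum>X\<in>?S. (-1::real)^card(X \<inter> {..<i}))"
    using kraw_set[of "{..<n}" "{..<i}" w] assms by auto
  have k2: "krawtchouk n w (n - i) = (\<Sum>X\<in>?S. (-1::real)^card(X \<inter> {i..<n}))"
    using kraw_set[of "{..<n}" "{i..<n}" w] assms by (auto simp: subset_iff)
  have "(\<Sum>X\<in>?S. (-1::real)^card(X \<inter> {i..<n})) = (\<Sum>X\<in>?S. (-1)^w * (-1::real)^card(X \<inter> {..<i}))"
  proof (rule sum.cong)
    fix X assume X: "X \<in> ?S"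
    have fX: "finite X" using X finite_subset by auto
    have un: "X = (X \<inter> {..<i}) \<union> (X \<inter> {i..<n})" using X by auto
    have "card X = card (X \<inter> {..<i}) + card (X \<inter> {i..<n})"
      using fX by (subst un, intro card_Un_disjoint) auto
    then have cw: "card (X \<inter> {i..<n}) = w - card (X \<inter> {..<i})" "card (X \<inter> {..<i}) \<le> w" using X by auto
    have "(-1::real)^w = (-1)^(w - card (X \<inter> {..<i})) * (-1)^card (X \<inter> {..<i})"
      using cw(2) by (metis le_add_diff_inverse2 power_add)
    then have "(-1::real)^w * (-1)^card (X \<inter> {..<i}) = (-1)^(w - card (X \<inter> {..<i})) * ((-1)^card (X \<inter> {..<i}) * (-1)^card (X \<inter> {..<i}))"
      by (simp only: mult.assoc)
    also have "\<dots> = (-1)^(w - card (X \<inter> {..<i}))" by (simp only: neg1_sq mult_1_right)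
    finally show "(-1::real)^card(X \<inter> {i..<n}) = (-1)^w * (-1::real)^card(X \<inter> {..<i})"
      using cw(1) by (simp only:)
  qed simp
  also have "\<dots> = (-1)^w * (\<Sum>X\<in>?S. (-1::real)^card(X \<inter> {..<i}))"
    by (rule sum_distrib_left[symmetric])
  finally have "krawtchouk n w (n - i) = (-1)^w * krawtchouk n w i" unfolding k1 k2 .
  then show ?thesis by (simp only: abs_mult power_abs abs_neg_one power_one mult_1)
qed

definition vof :: "nat set \<Rightarrow> nat \<Rightarrow> bool" where "vof X = (\<lambda>i. i \<in> X)"
definition supp :: "nat \<Rightarrow> (nat \<Rightarrow> bool) \<Rightarrow> nat set" where "supp n x = {i. i < n \<and> x i}"

lemma inj_vof: "inj_on vof A"
  unfolding vof_def inj_on_def by (metis mem_Collect_eq Collect_mem_eq)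

lemma vecs_eq: "vecs n = vof ` Pow {..<n}"
proof
  show "vecs n \<subseteq> vof ` Pow {..<n}"
  proof
    fix x assume x: "x \<in> vecs n"
    have "x = vof (supp n x)" using x unfolding vecs_def vof_def supp_def
      by (auto simp: fun_eq_iff) (meson not_le)
    moreover have "supp n x \<in> Pow {..<n}" unfolding supp_def by auto
    ultimately show "x \<in> vof ` Pow {..<n}" by blast
  qed
  show "vof ` Pow {..<n} \<subseteq> vecs n" unfolding vecs_def vof_def by auto
qed

lemma finite_vecs: "finite (vecs n)" by (simp add: vecs_eq)

lemma card_vecs: "card (vecs n) = 2 ^ n"
  by (simp add: vecs_eq card_image inj_vof card_Pow)

lemma hweight_vof: "X \<subseteq> {..<n} \<Longrightarrow> hweight n (vof X) = card X"
  unfolding hweight_def vof_def by (metis (no_types, lifting) Collect_cong lessThan_iff subset_iff Collect_mem_eq)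

lemma wt_set: "{x\<in>vecs n. hweight n x = j} = vof ` {X. X \<subseteq> {..<n} \<and> card X = j}"
  unfolding vecs_eq using hweight_vof by fastforce

lemma card_wt_set: "card {x\<in>vecs n. hweight n x = j} = n choose j"
  by (simp add: wt_set card_image inj_vof n_subsets)

lemma supp_vecs: "supp n y \<subseteq> {..<n}" unfolding supp_def by auto

lemma card_supp: "card (supp n y) = hweight n y" unfolding supp_def hweight_def by simp

lemma sum_chr:
  "(\<Sum>x\<in>{x\<in>vecs n. hweight n x = w}. chr n y x) = krawtchouk n w (hweight n y)"
proof -
  have "(\<Sum>x\<in>{x\<in>vecs n. hweight n x = w}. chr n y x) = (\<Sum>X\<in>{X. X \<subseteq> {..<n} \<and> card X = w}. chr n y (vof X))"
    unfolding wt_set by (rule sum.reindex_cong[OF inj_vof]) auto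
  also have "\<dots> = (\<Sum>X\<in>{X. X \<subseteq> {..<n} \<and> card X = w}. (-1::real)^card(X \<inter> supp n y))"
  proof (rule sum.cong)
    fix X assume "X \<in> {X. X \<subseteq> {..<n} \<and> card X = w}"
    then have "{i. i < n \<and> y i \<and> vof X i} = X \<inter> supp n y" unfolding vof_def supp_def by auto
    then show "chr n y (vof X) = (-1::real)^card(X \<inter> supp n y)" unfolding chr_def by simp
  qed simp
  also have "\<dots> = krawtchouk n w (hweight n y)"
    using kraw_set[of "{..<n}" "supp n y" w] supp_vecs card_supp by simp
  finally show ?thesis .
qed

lemma kraw_far:
  fixes c K0 :: real and n w i t :: nat
  assumes hK: "\<And>m v i. m \<ge> 1 \<Longrightarrow> real v \<le> c * real m \<Longrightarrow> real i \<le> real m / 2 \<Longrightarrow>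
              \<bar>krawtchouk m v i\<bar> \<le> K0 * real (m choose v) * (1 - 2 * real v / real m) ^ i"
    and n: "n \<ge> 1" and hw: "real w \<le> c * real n" and hK0: "K0 \<ge> 1"
    and q0: "0 \<le> 1 - 2 * real w / real n" and q1: "1 - 2 * real w / real n \<le> 1"
    and ti: "t < i" and it: "i + t < n"
  shows "\<bar>krawtchouk n w i\<bar> \<le> K0 * real (n choose w) * (1 - 2 * real w / real n) ^ t"
proof -
  let ?q = "1 - 2 * real w / real n"
  have KB: "0 \<le> K0 * real (n choose w)" using hK0 by simp
  have main: "\<bar>krawtchouk n w j\<bar> \<le> K0 * real (n choose w) * ?q ^ t" if "t < j" "real j \<le> real n / 2" for j
  proof -
    have "\<bar>krawtchouk n w j\<bar> \<le> K0 * real (n choose w) * ?q ^ j" using hK[OF n hw that(2)] .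
    also have "\<dots> \<le> K0 * real (n choose w) * ?q ^ t"
      by (rule mult_left_mono[OF power_decreasing KB]) (use that q0 q1 in auto)
    finally show ?thesis .
  qed
  show ?thesis
  proof (cases "real i \<le> real n / 2")
    case True then show ?thesis using main ti by blast
  next
    case False
    have iln: "i \<le> n" using it by linarith
    have nii: "n - (n - i) = i" using iln by simp
    have "\<bar>krawtchouk n w i\<bar> = \<bar>krawtchouk n w (n - i)\<bar>"
      using kraw_sym[of "n - i" n w] nii by simp
    also have "\<dots> \<le> K0 * real (n choose w) * ?q ^ t"
    proof (rule main)
      show "t < n - i" using it by linarith
      have "real (n - i) = real n - real i" using iln by (rule of_nat_diff)
      then show "real (n - i) \<le> real n / 2" using False by linarith
    qed
    finally show ?thesis .
  qed
qed

lemma vecs_vadd: "x \<in> vecs n \<Longrightarrow> y \<in> vecs n \<Longrightarrow> vadd x y \<in> vecs n"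
  unfolding vecs_def vadd_def by auto

lemma vzero_dual: "vzero \<in> dual_code n Cd"
  unfolding dual_code_def vzero_def vecs_def by simp

lemma dual_vecs: "dual_code n Cd \<subseteq> vecs n"
  unfolding dual_code_def by auto

lemma card_symdiff_even:
  assumes "finite A" "finite B"
  shows "even (card ((A - B) \<union> (B - A))) = even (card A + card B)"
proof -
  have a: "card A = card (A - B) + card (A \<inter> B)"
    using card_Int_Diff[OF assms(1), of B] by simp
  have b: "card B = card (B - A) + card (A \<inter> B)"
    using card_Int_Diff[OF assms(2), of A] by (simp add: Int_commute)
  have c: "card ((A - B) \<union> (B - A)) = card (A - B) + card (B - A)"
    using assms by (intro card_Un_disjoint) auto
  show ?thesis using a b c by presburger
qed

lemma dual_add:
  assumes "a \<in> dual_code n Cd" "b \<in> dual_code n Cd"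
  shows "vadd a b \<in> dual_code n Cd"
  unfolding dual_code_def
proof (intro CollectI conjI ballI)
  show "vadd a b \<in> vecs n" using assms dual_vecs vecs_vadd by blast
  fix x assume x: "x \<in> Cd"
  let ?A = "{i. i < n \<and> x i \<and> a i}" and ?B = "{i. i < n \<and> x i \<and> b i}"
  have "{i. i < n \<and> x i \<and> vadd a b i} = (?A - ?B) \<union> (?B - ?A)" unfolding vadd_def by auto
  moreover have "even (card ?A)" "even (card ?B)" using assms x unfolding dual_code_def by auto
  ultimately show "even (card {i. i < n \<and> x i \<and> vadd a b i})"
    using card_symdiff_even[of ?A ?B] by simp
qed

lemma vadd_vzero[simp]: "vadd x vzero = x" unfolding vadd_def vzero_def by simp
lemma vadd_cancel[simp]: "vadd (vadd x c) c = x" unfolding vadd_def by auto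
lemma vadd_assoc2: "vadd (vadd x a) (vadd a b) = vadd x b" unfolding vadd_def by auto

definition comp :: "nat \<Rightarrow> (nat \<Rightarrow> bool) \<Rightarrow> nat \<Rightarrow> bool" where "comp n y = (\<lambda>i. i < n \<and> \<not> y i)"

lemma hweight_le: "hweight n y \<le> n"
  using card_mono[OF finite_lessThan supp_vecs, of n y] card_supp[of n y] by simp

lemma hweight_comp: "hweight n (comp n y) = n - hweight n y"
proof -
  have e: "{i. i < n \<and> comp n y i} = {..<n} - supp n y" unfolding comp_def supp_def by auto
  have f: "finite (supp n y)" using finite_subset[OF supp_vecs finite_lessThan] .
  have "card ({..<n} - supp n y) = card {..<n} - card (supp n y)"
    using card_Diff_subset[OF f supp_vecs] .
  then show ?thesis unfolding hweight_def e using card_supp[of n y] unfolding hweight_def by simp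
qed

lemma comp_vecs: "comp n y \<in> vecs n" unfolding comp_def vecs_def by auto

lemma inj_comp: "inj_on (comp n) (vecs n)"
proof (rule inj_onI)
  fix x y assume x: "x \<in> vecs n" and y: "y \<in> vecs n" and e: "comp n x = comp n y"
  show "x = y"
  proof
    fix i show "x i = y i"
    proof (cases "i < n")
      case True then show ?thesis using fun_cong[OF e, of i] unfolding comp_def by simp
    next
      case False then show ?thesis using x y unfolding vecs_def by simp
    qed
  qed
qed



theorem mainTheorem3:
  fixes c K0 :: real and n w :: nat and Cd :: "(nat \<Rightarrow> bool) set"
    and \<epsilon> :: real and \<rho> :: "(nat \<Rightarrow> bool) \<Rightarrow> real"
  assumes hc: "0 < c" "c < 1" and hK0: "K0 \<ge> 1"
    and hK: "\<And>m v i. m \<ge> 1 \<Longrightarrow> real v \<le> c * real m \<Longrightarrow> real i \<le> real m / 2 \<Longrightarrow>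
              \<bar>krawtchouk m v i\<bar> \<le> K0 * real (m choose v) * (1 - 2 * real v / real m) ^ i"
    and hC: "linear_code n Cd"
    and hdual: "dual_code n Cd \<noteq> {vzero}"
    and hd: "real (dual_distance n Cd) < real n / 2"
    and hw: "real w \<le> c * real n"
    and he: "\<epsilon> > 0"
    and hrho: "is_pmf n \<rho>"
    and htv: "dTV n (conv n (unif_on (dual_code n Cd)) \<rho>) (unif_on (vecs n)) \<le> \<epsilon>"
  shows "(let t = (dual_distance n Cd - 1) div 2 in
          1 / real (n choose w) * (\<Sum>x\<in>{x \<in> vecs n. hweight n x = w}. 2 ^ n * fourier n \<rho> x)
          \<le> real (card (dual_code n Cd)) * real (hball_vol n t) / 2 ^ (n - 1)
             + K0 * real n * (1 - 2 * real w / real n) ^ t + 2 * \<epsilon>)"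
proof -
  define t where "t = (dual_distance n Cd - 1) div 2"
  define D where "D = dual_code n Cd"
  define V where "V = vecs n"
  define q where "q = 1 - 2 * real w / real n"
  define Bn where "Bn = real (n choose w)"
  have n1: "n \<ge> 1" using hd by (cases n) auto
  have "c * real n < real n" using hc n1 by simp
  then have "real w < real n" using hw by linarith
  then have wn: "w < n" by simp
  have Bpos: "Bn > 0" unfolding Bn_def using wn by simp
  have q1: "q \<le> 1" unfolding q_def by simp
  have q0: "0 \<le> q"
  proof (rule ccontr)
    assume neg: "\<not> 0 \<le> q"
    have "n \<ge> 2"
    proof (rule ccontr)
      assume "\<not> n \<ge> 2" then have "n = 1" using n1 by simp
      then have "w = 0" using wn by simp
      then show False using neg unfolding q_def by simp
    qed
    then have "real 1 \<le> real n / 2" by simp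
    from hK[OF n1 hw this] have "\<bar>krawtchouk n w 1\<bar> \<le> K0 * Bn * q" unfolding Bn_def q_def by simp
    moreover have "K0 * Bn * q < 0" using neg Bpos hK0 by (simp add: mult_pos_neg)
    ultimately show False by linarith
  qed
  have finV: "finite V" unfolding V_def by (rule finite_vecs)
  have DV: "D \<subseteq> V" unfolding D_def V_def by (rule dual_vecs)
  have finD: "finite D" using finV DV finite_subset by blast
  have D0: "vzero \<in> D" unfolding D_def by (rule vzero_dual)
  have "card D > 0" using finD D0 card_gt_0_iff by blast
  then have cardD: "card D \<ge> 1" by simp
  have rho0: "\<And>x. \<rho> x \<ge> 0" and rho1: "(\<Sum>x\<in>V. \<rho> x) = 1" using hrho unfolding is_pmf_def V_def by auto

  have lhs: "(\<Sum>x\<in>{x \<in> vecs n. hweight n x = w}. 2 ^ n * fourier n \<rho> x)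
      = (\<Sum>y\<in>V. \<rho> y * krawtchouk n w (hweight n y))"
  proof -
    have "(\<Sum>x\<in>{x \<in> vecs n. hweight n x = w}. 2 ^ n * fourier n \<rho> x)
        = (\<Sum>x\<in>{x \<in> vecs n. hweight n x = w}. \<Sum>y\<in>V. \<rho> y * chr n y x)"
      unfolding fourier_def V_def by simp
    also have "\<dots> = (\<Sum>y\<in>V. \<Sum>x\<in>{x \<in> vecs n. hweight n x = w}. \<rho> y * chr n y x)"
      by (rule sum.swap)
    also have "\<dots> = (\<Sum>y\<in>V. \<rho> y * krawtchouk n w (hweight n y))"
      by (simp add: sum_distrib_left[symmetric] sum_chr)
    finally show ?thesis .
  qed

  define Ball where "Ball = {y \<in> V. hweight n y \<le> t \<or> n - t \<le> hweight n y}"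
  define N where "N = {x \<in> V. \<exists>c\<in>D. vadd x c \<in> Ball}"
  have NV: "N \<subseteq> V" unfolding N_def by auto
  have finN: "finite N" using NV finV finite_subset by blast

  have conv_eq: "conv n (unif_on D) \<rho> x = (\<Sum>c\<in>D. \<rho> (vadd x c)) / real (card D)" for x
  proof -
    have "conv n (unif_on D) \<rho> x = (\<Sum>y\<in>V. if y \<in> D then \<rho> (vadd x y) / real (card D) else 0)"
      unfolding conv_def unif_on_def V_def vsub_def by (rule sum.cong) auto
    also have "\<dots> = (\<Sum>y\<in>V \<inter> D. \<rho> (vadd x y) / real (card D))"
      using sum.inter_restrict[OF finV, of "\<lambda>y. \<rho> (vadd x y) / real (card D)" D] by simp
    also have "V \<inter> D = D" using DV by auto
    finally show ?thesis by (simp add: sum_divide_distrib)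
  qed
  have inv: "(\<Sum>x\<in>N. \<rho> (vadd x c)) = (\<Sum>x\<in>N. \<rho> x)" if c: "c \<in> D" for c
  proof (rule sum.reindex_bij_witness[where i="\<lambda>x. vadd x c" and j="\<lambda>x. vadd x c"])
    fix x assume x: "x \<in> N"
    show "vadd (vadd x c) c = x" by simp
    from x obtain c' where c': "c' \<in> D" "vadd x c' \<in> Ball" unfolding N_def by auto
    have "vadd c c' \<in> D" using c c' unfolding D_def by (intro dual_add)
    moreover have "vadd (vadd x c) (vadd c c') \<in> Ball" using c' vadd_assoc2 by metis
    moreover have "vadd x c \<in> V" using x NV DV c vecs_vadd unfolding V_def by blast
    ultimately show "vadd x c \<in> N" unfolding N_def by blast
    show "vadd (vadd x c) c = x" by simp
    show "vadd x c \<in> N" by fact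
    show "\<rho> (vadd x c) = \<rho> (vadd x c)" by simp
  qed
  have fN: "(\<Sum>x\<in>N. conv n (unif_on D) \<rho> x) = (\<Sum>x\<in>N. \<rho> x)"
  proof -
    have "(\<Sum>x\<in>N. conv n (unif_on D) \<rho> x) = (\<Sum>x\<in>N. \<Sum>c\<in>D. \<rho> (vadd x c)) / real (card D)"
      by (simp add: conv_eq sum_divide_distrib)
    also have "(\<Sum>x\<in>N. \<Sum>c\<in>D. \<rho> (vadd x c)) = (\<Sum>c\<in>D. \<Sum>x\<in>N. \<rho> (vadd x c))" by (rule sum.swap)
    also have "\<dots> = (\<Sum>c\<in>D. \<Sum>x\<in>N. \<rho> x)" using inv by simp
    also have "\<dots> / real (card D) = (\<Sum>x\<in>N. \<rho> x)" using cardD by simp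
    finally show ?thesis .
  qed
  have rhoN: "(\<Sum>x\<in>N. \<rho> x) \<le> real (card N) / 2 ^ n + 2 * \<epsilon>"
  proof -
    let ?f = "conv n (unif_on D) \<rho>" and ?U = "unif_on (vecs n)"
    have U: "(\<Sum>x\<in>N. ?U x) = real (card N) / 2 ^ n"
      using NV unfolding unif_on_def V_def by (simp add: card_vecs subset_iff)
    have "(\<Sum>x\<in>N. ?f x) - (\<Sum>x\<in>N. ?U x) = (\<Sum>x\<in>N. ?f x - ?U x)" by (simp add: sum_subtractf)
    also have "\<dots> \<le> (\<Sum>x\<in>N. \<bar>?f x - ?U x\<bar>)" by (rule sum_mono) simp
    also have "\<dots> \<le> (\<Sum>x\<in>V. \<bar>?f x - ?U x\<bar>)" by (rule sum_mono2[OF finV NV]) simp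
    also have "\<dots> \<le> 2 * \<epsilon>" using htv unfolding dTV_def V_def D_def by simp
    finally show ?thesis using fN U by simp
  qed

  have cardN: "card N \<le> card D * card Ball"
  proof -
    have "N \<subseteq> (\<lambda>(c, b). vadd b c) ` (D \<times> Ball)"
    proof
      fix x assume "x \<in> N"
      then obtain c where "c \<in> D" "vadd x c \<in> Ball" unfolding N_def by auto
      then show "x \<in> (\<lambda>(c, b). vadd b c) ` (D \<times> Ball)"
        by (intro image_eqI[where x="(c, vadd x c)"]) auto
    qed
    moreover have fDB: "finite (D \<times> Ball)" using finD finV unfolding Ball_def by auto
    ultimately have "card N \<le> card ((\<lambda>(c, b). vadd b c) ` (D \<times> Ball))"
      by (intro card_mono finite_imageI)
    also have "\<dots> \<le> card (D \<times> Ball)" by (rule card_image_le[OF fDB])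
    finally have "card N \<le> card (D \<times> Ball)" .
    then show ?thesis by (simp add: card_cartesian_product)
  qed
  have cardBall: "card Ball \<le> 2 * hball_vol n t"
  proof -
    define B1 where "B1 = {y \<in> V. hweight n y \<le> t}"
    define B2 where "B2 = {y \<in> V. n - t \<le> hweight n y}"
    have finB1: "finite B1" "finite B2" using finV unfolding B1_def B2_def by auto
    have "B1 = (\<Union>j\<in>{0..t}. {x \<in> vecs n. hweight n x = j})" unfolding B1_def V_def by auto
    moreover have "card (\<Union>j\<in>{0..t}. {x \<in> vecs n. hweight n x = j}) = (\<Sum>j\<in>{0..t}. card {x \<in> vecs n. hweight n x = j})"
      by (rule card_UN_disjoint) (auto simp: finite_vecs)
    ultimately have c1: "card B1 = hball_vol n t" unfolding hball_vol_def by (simp only: card_wt_set)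
    have "card B2 \<le> card B1"
    proof (rule card_inj_on_le[where f="comp n"])
      show "inj_on (comp n) B2" using inj_comp unfolding B2_def V_def by (rule inj_on_subset) auto
      show "comp n ` B2 \<subseteq> B1" unfolding B1_def B2_def V_def using hweight_comp comp_vecs by auto
      show "finite B1" by fact
    qed
    moreover have "Ball = B1 \<union> B2" unfolding Ball_def B1_def B2_def by auto
    ultimately show ?thesis using card_Un_le[of B1 B2] c1 by simp
  qed

  have near: "\<rho> y * krawtchouk n w (hweight n y) \<le> \<rho> y * Bn" for y
    using kraw_abs_le[of "hweight n y" n w] hweight_le[of n y] rho0[of y] unfolding Bn_def
    by (intro mult_left_mono) auto
  have far: "\<rho> y * krawtchouk n w (hweight n y) \<le> \<rho> y * (K0 * Bn * q ^ t)" if y: "y \<in> V - N" for y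
  proof -
    have "y \<notin> Ball" using y D0 unfolding N_def by force
    then have "t < hweight n y" "hweight n y + t < n" using y unfolding Ball_def by auto
    then have "\<bar>krawtchouk n w (hweight n y)\<bar> \<le> K0 * Bn * q ^ t"
      unfolding Bn_def q_def using kraw_far[OF hK n1 hw hK0] q0 q1 unfolding q_def by blast
    then show ?thesis using rho0[of y] by (intro mult_left_mono) auto
  qed
  have "(\<Sum>y\<in>V. \<rho> y * krawtchouk n w (hweight n y))
      = (\<Sum>y\<in>V - N. \<rho> y * krawtchouk n w (hweight n y)) + (\<Sum>y\<in>N. \<rho> y * krawtchouk n w (hweight n y))"
    by (rule sum.subset_diff[OF NV finV])
  also have "\<dots> \<le> (\<Sum>y\<in>V - N. \<rho> y * (K0 * Bn * q ^ t)) + (\<Sum>y\<in>N. \<rho> y * Bn)"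
    by (intro add_mono sum_mono far near) auto
  also have "\<dots> = (\<Sum>y\<in>V - N. \<rho> y) * (K0 * Bn * q ^ t) + (\<Sum>y\<in>N. \<rho> y) * Bn"
    by (simp add: sum_distrib_right)
  also have "\<dots> \<le> 1 * (K0 * Bn * q ^ t) + (real (card N) / 2 ^ n + 2 * \<epsilon>) * Bn"
  proof (intro add_mono mult_right_mono rhoN)
    show "(\<Sum>y\<in>V - N. \<rho> y) \<le> 1" using rho1 sum_mono2[OF finV, of "V - N" \<rho>] rho0 by auto
    show "0 \<le> K0 * Bn * q ^ t" using hK0 Bpos q0 by simp
    show "0 \<le> Bn" using Bpos by simp
  qed
  finally have S: "(\<Sum>y\<in>V. \<rho> y * krawtchouk n w (hweight n y)) \<le> Bn * (K0 * q ^ t + real (card N) / 2 ^ n + 2 * \<epsilon>)"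
    by (simp add: algebra_simps)
  have "1 / Bn * (\<Sum>y\<in>V. \<rho> y * krawtchouk n w (hweight n y)) \<le> K0 * q ^ t + real (card N) / 2 ^ n + 2 * \<epsilon>"
    using S Bpos by (simp add: field_simps)
  also have "real (card N) / 2 ^ n \<le> real (card D) * real (hball_vol n t) / 2 ^ (n - 1)"
  proof -
    have "real (card N) \<le> real (card D) * (2 * real (hball_vol n t))"
    proof -
      have "card N \<le> card D * (2 * hball_vol n t)" using cardN cardBall mult_le_mono2 le_trans by blast
      then have "real (card N) \<le> real (card D * (2 * hball_vol n t))" by (simp only: of_nat_le_iff)
      then show ?thesis by simp
    qed
    moreover have "(2::real) ^ n = 2 * 2 ^ (n - 1)" using n1 by (cases n) auto
    ultimately show ?thesis by (simp add: field_simps)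
  qed
  also have "K0 * q ^ t \<le> K0 * real n * q ^ t"
  proof -
    have a: "0 \<le> K0 * q ^ t" using hK0 q0 by simp
    have "1 * (K0 * q ^ t) \<le> real n * (K0 * q ^ t)" using n1 by (intro mult_right_mono a) simp
    then show ?thesis by (simp add: mult_ac)
  qed
  finally have fin: "1 / Bn * (\<Sum>y\<in>V. \<rho> y * krawtchouk n w (hweight n y))
     \<le> real (card D) * real (hball_vol n t) / 2 ^ (n - 1) + K0 * real n * q ^ t + 2 * \<epsilon>"
    by linarith
  show ?thesis unfolding Let_def t_def[symmetric] lhs using fin unfolding Bn_def q_def D_def .
qed


end
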